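(* Let $q=p^m$ with $p>3$ prime and $m\ge1$, let $f(x)=x^{q+2}$ on $\mathbb{F}_{q^2}$, and for $b\in\mathbb{F}_{q^2}$ let $\delta(b)=\#\{u\in\mathbb{F}_{q^2}:\ 2u^{q+1}+u^2=b\}$. Then $\delta(3)=4$ if $q\equiv 5\pmod 6$, and $\delta(3)=2$ otherwise. In particular, if $q\equiv 5\pmod 6$ then the differential uniformity of $f$ is $\delta_f=4$.
   Context: $\delta_f(a,b)=\#\{x\in\mathbb{F}_{q^2}: f(x+a)-f(x)=b\}$, and $\delta_f=\max_{a\in\mathbb{F}_{q^2}^*,b\in\mathbb{F}_{q^2}}\delta_f(a,b)$; note $\delta(b)=\delta_f(1,b+\tfrac14)$. *)

theory Defs
  imports "HOL-Computational_Algebra.Primes"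
begin

definition diff_count :: "('a::{field,finite} \<Rightarrow> 'a) \<Rightarrow> 'a \<Rightarrow> 'a \<Rightarrow> nat" where
  "diff_count f a b = card {x. f (x + a) - f x = b}"

definition diff_unif :: "('a::{field,finite} \<Rightarrow> 'a) \<Rightarrow> nat" where
  "diff_unif f = Max {diff_count f a b | a b. a \<noteq> 0}"

end

theory Submission imports Defs "HOL-Computational_Algebra.Polynomial" begin

lemma card_UNIV_zero:
  "of_nat (card (UNIV :: 'a::{field,finite} set)) = (0::'a)"
proof -
  have "(\<Sum>y\<in>(UNIV::'a set). y + 1) = (\<Sum>y\<in>UNIV. y)"
    by (rule sum.reindex_bij_witness[of _ "\<lambda>y. y - 1" "\<lambda>y. y + 1"]) auto
  then show ?thesis by (simp add: sum.distrib)
qed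

lemma power_card_same:
  fixes x :: "'a::{field,finite}"
  shows   "x ^ card (UNIV :: 'a set) = x"
proof (cases "x = 0")
  case False
  have "x * (\<Prod>y\<in>UNIV-{0}. x * y) = x * x ^ (card (UNIV :: 'a set) - 1) * \<Prod>(UNIV-{0})"
    by (simp add: prod.distrib mult_ac)
  also have "x * x ^ (card (UNIV :: 'a set) - 1) = x ^ Suc (card (UNIV :: 'a set) - 1)"
    by (subst power_Suc) auto
  also have "Suc (card (UNIV :: 'a set) - 1) = card (UNIV :: 'a set)"
    using finite_UNIV_card_ge_0[where ?'a = 'a] by simp
  also have "(\<Prod>y\<in>UNIV-{0}. x * y) = (\<Prod>y\<in>UNIV-{0}. y)"
    by (rule prod.reindex_bij_witness[of _ "\<lambda>y. y / x" "\<lambda>y. x * y"]) (use False in auto)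
  finally show ?thesis
    by simp
qed (use finite_UNIV_card_ge_0[where ?'a = 'a] in auto)

lemma roots2:
  fixes A B C :: "'b::field"
  assumes "A \<noteq> 0"
  shows "card {x. A*x^2 + B*x + C = 0} \<le> 2"
proof -
  let ?P = "[:C, B, A:]"
  have "?P \<noteq> 0" using assms by simp
  hence "card {x. poly ?P x = 0} \<le> degree ?P" by (rule card_poly_roots_bound)
  moreover have "degree ?P \<le> 2" using assms by simp
  moreover have "{x. poly ?P x = 0} = {x. A*x^2+B*x+C=0}"
    by (auto simp: algebra_simps power2_eq_square)
  ultimately show ?thesis by simp
qed

context
  fixes p m q :: nat
  assumes pr: "prime p" and p3: "p > 3" and m1: "m \<ge> 1" and qd: "q = p^m"
    and cardA: "card (UNIV :: 'a::{field,finite} set) = q^2"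
begin

lemma CHAR_eq: "CHAR('a) = p"
proof -
  have "of_nat (card (UNIV::'a set)) = (0::'a)" by (rule card_UNIV_zero)
  hence "CHAR('a) dvd card (UNIV::'a set)" by (simp only: of_nat_eq_0_iff_char_dvd)
  hence "CHAR('a) dvd (p^m)^2" by (simp only: cardA qd)
  moreover have "prime CHAR('a)"
    by (rule prime_CHAR_semidom) (rule finite_imp_CHAR_pos, simp)
  ultimately have "CHAR('a) dvd p" using prime_dvd_power by metis
  then show ?thesis using pr \<open>prime CHAR('a)\<close> primes_dvd_imp_eq by blast
qed

lemma q_odd: "odd q"
proof -
  have "odd p" using pr p3 by (simp add: prime_odd_nat)
  then show ?thesis using qd by simp
qed

lemma frob_add: "((x::'a) + y) ^ q = x ^ q + y ^ q"
  using freshmans_dream'[where 'a='a] CHAR_eq pr qd by auto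

lemma frob_neg: "(- (x::'a)) ^ q = - (x ^ q)"
  using q_odd by (simp add: power_minus_odd)

lemma frob_sub: "((x::'a) - y) ^ q = x ^ q - y ^ q"
  using frob_add[of x "-y"] frob_neg[of y] by simp

lemma frob_nat: "(of_nat n :: 'a) ^ q = of_nat n"
proof (induction n)
  case 0 then show ?case using qd pr by (simp add: prime_gt_0_nat)
next
  case (Suc n) then show ?case using frob_add[of 1 "of_nat n"] by simp
qed

lemma frob_2: "(2::'a) ^ q = 2" using frob_nat[of 2] by simp
lemma frob_3: "(3::'a) ^ q = 3" using frob_nat[of 3] by simp
lemma frob_half: "(1/2::'a) ^ q = 1/2" using frob_2 by (simp add: power_one_over)

lemma frob_frob: "((x::'a) ^ q) ^ q = x"
  using power_card_same[of x] cardA by (simp add: power_mult[symmetric] power2_eq_square)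

lemma frob_sq: "((x::'a)^2) ^ q = (x ^ q)^2"
  by (simp add: power_mult[symmetric] mult.commute)

lemma two_ne: "(2::'a) \<noteq> 0"
proof
  assume "(2::'a) = 0"
  then have "of_nat 2 = (0::'a)" by simp
  then have "p dvd 2" using CHAR_eq by (simp only: of_nat_eq_0_iff_char_dvd)
  then have "p \<le> 2" by (rule dvd_imp_le) simp
  then show False using p3 by simp
qed

lemma three_ne: "(3::'a) \<noteq> 0"
proof
  assume "(3::'a) = 0"
  then have "of_nat 3 = (0::'a)" by simp
  then have "p dvd 3" using CHAR_eq by (simp only: of_nat_eq_0_iff_char_dvd)
  then have "p \<le> 3" by (rule dvd_imp_le) simp
  then show False using p3 by simp
qed


lemma four_ne: "(4::'a) \<noteq> 0"
proof -
  have "(2::'a)*2 \<noteq> 0" by (rule no_zero_divisors) (rule two_ne)+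
  then show ?thesis by simp
qed

lemma key_id: "((u::'a) + 1/2)^(q+2) - (u - 1/2)^(q+2) = 2*u^(q+1) + u^2 + 1/4"
proof -
  have e1: "(u + 1/2)^(q+2) = (u^q + 1/2) * (u+1/2)^2"
    by (simp only: power_add frob_add frob_half)
  have e2: "(u - 1/2)^(q+2) = (u^q - 1/2) * (u-1/2)^2"
    by (simp only: power_add frob_sub frob_half)
  have e3: "u^(q+1) = u^q * u" by (simp only: power_add power_one_right)
  have r: "(v+h)*(u+h)^2 - (v-h)*(u-h)^2 = (2*h)*(2*(v*u)) + (2*h)*u^2 + (2*h)*h^2" for h v :: 'a
    by (simp add: algebra_simps power2_eq_square)
  have h2: "2*(1/2::'a) = 1" using two_ne by simp
  have h3: "(1/2::'a)^2 = 1/4" by (simp add: power_one_over)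
  show ?thesis unfolding e1 e2 e3 r[of "u^q" "1/2"] h2 h3 by simp
qed

lemma set_eq:
  assumes "(a::'a) \<noteq> 0"
  shows "{x::'a. (x+a)^(q+2) - x^(q+2) = b}
       = (\<lambda>u. a*(u - 1/2)) ` {u. 2*u^(q+1)+u^2 = b/a^(q+2) - 1/4}"
proof -
  have id: "(a*(u+1/2))^(q+2) - (a*(u-1/2))^(q+2) = a^(q+2)*(2*u^(q+1)+u^2+1/4)" for u
  proof -
    have "(a*(u+1/2))^(q+2) - (a*(u-1/2))^(q+2) = a^(q+2)*((u+1/2)^(q+2) - (u-1/2)^(q+2))"
      by (simp only: power_mult_distrib right_diff_distrib[of "a^(q+2)"])
    then show ?thesis using key_id[of u] by simp
  qed
  have an: "a^(q+2) \<noteq> 0" using assms by simp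
  show ?thesis
  proof (rule set_eqI, rule iffI)
    fix x assume "x \<in> {x. (x+a)^(q+2) - x^(q+2) = b}"
    hence h: "(x+a)^(q+2) - x^(q+2) = b" by simp
    define u where "u = x/a + 1/2"
    have xa: "x = a*(u-1/2)" "x + a = a*(u+1/2)" using assms two_ne four_ne by (simp_all add: u_def field_simps)
    have "a^(q+2)*(2*u^(q+1)+u^2+1/4) = b" using h id[of u] xa by simp
    hence "2*u^(q+1)+u^2 = b/a^(q+2) - 1/4" using an two_ne four_ne by (simp add: field_simps)
    thus "x \<in> (\<lambda>u. a*(u - 1/2)) ` {u. 2*u^(q+1)+u^2 = b/a^(q+2) - 1/4}"
      using xa(1) by blast
  next
    fix x assume "x \<in> (\<lambda>u. a*(u - 1/2)) ` {u. 2*u^(q+1)+u^2 = b/a^(q+2) - 1/4}"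
    then obtain u where u: "2*u^(q+1)+u^2 = b/a^(q+2) - 1/4" "x = a*(u-1/2)" by auto
    have "x + a = a*(u+1/2)" using u(2) two_ne four_ne by (simp add: field_simps)
    then have "(x+a)^(q+2) - x^(q+2) = a^(q+2)*(2*u^(q+1)+u^2+1/4)" using id[of u] u(2) by simp
    also have "\<dots> = b" using u(1) an two_ne four_ne by (simp add: field_simps)
    finally show "x \<in> {x. (x+a)^(q+2) - x^(q+2) = b}" by simp
  qed
qed

lemma card_eq:
  assumes "(a::'a) \<noteq> 0"
  shows "card {x::'a. (x+a)^(q+2) - x^(q+2) = b} = card {u::'a. 2*u^(q+1)+u^2 = b/a^(q+2) - 1/4}"
proof -
  have "inj_on (\<lambda>u. a*(u - 1/2)) X" for X using assms by (auto simp: inj_on_def)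
  then show ?thesis unfolding set_eq[OF assms] by (simp add: card_image)
qed

lemma frob_eq:
  assumes "2*(u^q*u) + (u::'a)^2 = c"
  shows "2*(u*u^q) + (u^q)^2 = c^q"
proof -
  have "(2*(u^q*u) + u^2)^q = c^q" using assms by simp
  then show ?thesis by (simp only: frob_add power_mult_distrib frob_frob frob_sq frob_2)
qed

lemma bound4: "card {u::'a. 2*u^(q+1)+u^2 = c} \<le> 4"
proof -
  let ?R = "{N::'a. 3*N^2 + (-2*(c + c^q))*N + c*c^q = 0}"
  let ?S = "{u::'a. 2*u^(q+1)+u^2 = c}"
  let ?T = "\<lambda>N. {u::'a. 1*u^2 + 0*u + (-(c - 2*N)) = 0}"
  have sub: "?S \<subseteq> (\<Union>N\<in>?R. ?T N)"
  proof
    fix u assume "u \<in> ?S"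
    hence h1: "2*(u^q*u) + u^2 = c" by (simp add: power_add mult.commute)
    have h2: "2*(u*u^q) + (u^q)^2 = c^q" by (rule frob_eq[OF h1])
    define N where "N = u^q*u"
    have a1: "u^2 = c - 2*N" using h1 N_def by (simp add: algebra_simps)
    have a2: "(u^q)^2 = c^q - 2*N" using h2 N_def by (simp add: algebra_simps)
    have "N^2 = u^2*(u^q)^2" by (simp add: N_def power_mult_distrib mult.commute)
    also have "\<dots> = (c - 2*N)*(c^q - 2*N)" using a1 a2 by simp
    finally have "N \<in> ?R" by (simp add: algebra_simps power2_eq_square)
    moreover have "u \<in> ?T N" using a1 by simp
    ultimately show "u \<in> (\<Union>N\<in>?R. ?T N)" by blast
  qed
  have "card ?S \<le> card (\<Union>N\<in>?R. ?T N)" by (rule card_mono[OF _ sub]) simp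
  also have "\<dots> \<le> (\<Sum>N\<in>?R. card (?T N))" by (rule card_UN_le) simp
  also have "\<dots> \<le> (\<Sum>N\<in>?R. 2)" by (rule sum_mono) (rule roots2, simp)
  also have "\<dots> = 2 * card ?R" by simp
  also have "\<dots> \<le> 2 * 2" using roots2[of "3::'a"] three_ne by (intro mult_le_mono2) auto
  finally show ?thesis by simp
qed


lemma sol3: "{u::'a. 2*u^(q+1)+u^2 = 3} = {1, -1} \<union> {u. u^2 = -3 \<and> u^q = -u}"
proof (rule set_eqI, rule iffI)
  fix u :: 'a assume "u \<in> {u::'a. 2*u^(q+1)+u^2 = 3}"
  hence h1: "2*(u^q*u) + u^2 = 3" by (simp add: power_add mult.commute)
  have h2: "2*(u*u^q) + (u^q)^2 = 3" using frob_eq[OF h1] frob_3 by simp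
  from h1 h2 have "2*(u*u^q) + u^2 = 2*(u*u^q) + (u^q)^2" by (simp add: mult.commute)
  hence "u^2 = (u^q)^2" by simp
  hence "(u - u^q)*(u + u^q) = 0" by (simp add: algebra_simps power2_eq_square)
  hence "u - u^q = 0 \<or> u + u^q = 0" by (simp only: mult_eq_0_iff)
  hence "u^q = u \<or> u^q = -u" by (metis right_minus_eq add_eq_0_iff)
  then show "u \<in> {1, -1} \<union> {u. u^2 = -3 \<and> u^q = -u}"
  proof
    assume e: "u^q = u"
    have "3*u^2 = 3*1" using h1 unfolding e by (simp add: power2_eq_square)
    hence "u^2 = 1" using three_ne by simp
    thus ?thesis by (auto simp: power2_eq_1_iff)
  next
    assume e: "u^q = -u"
    have "-(u^2) = 3" using h1 unfolding e by (simp add: power2_eq_square algebra_simps)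
    hence "u^2 = -3" by (metis minus_equation_iff)
    thus ?thesis using e by simp
  qed
next
  fix u :: 'a assume "u \<in> {1, -1} \<union> {u. u^2 = -3 \<and> u^q = -u}"
  then consider "u = 1" | "u = -1" | "u^2 = -3" "u^q = -u" by auto
  then show "u \<in> {u::'a. 2*u^(q+1)+u^2 = 3}"
  proof cases
    case 1 then show ?thesis by simp
  next
    case 2
    have "(-1::'a)^q = -1" using frob_neg[of 1] by simp
    then show ?thesis using 2 by (simp add: power_add)
  next
    case 3
    have "2*u^(q+1)+u^2 = -(u^2)" using 3(2) by (simp add: power_add power2_eq_square)
    then show ?thesis using 3(1) by simp
  qed
qed

lemma q_mod3: "q mod 3 = 1 \<or> q mod 3 = 2"
proof -
  have "\<not> 3 dvd q"
  proof
    assume "3 dvd q"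
    hence "(3::nat) dvd p" using qd prime_dvd_power[of "3::nat" p m] by simp
    hence "(3::nat) = p" using pr primes_dvd_imp_eq[of 3 p] by simp
    thus False using p3 by simp
  qed
  thus ?thesis by presburger
qed

lemma q_mod6: "q mod 6 = 5 \<longleftrightarrow> q mod 3 = 2"
  using q_odd q_mod3 by presburger

lemma cube:
  assumes "(u::'a)^2 = -3"
  shows "q mod 3 = 1 \<Longrightarrow> u^q = u" and "q mod 3 = 2 \<Longrightarrow> u^q = -u"
proof -
  define w where "w = (u - 1)/2"
  have w2: "2*w = u - 1" using two_ne by (simp add: w_def)
  have "4*(w^2+w+1) = (2*w)^2 + 2*(2*w) + 4" by (simp add: algebra_simps power2_eq_square)
  also have "\<dots> = u^2 + 3" unfolding w2 by (simp add: algebra_simps power2_eq_square)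
  finally have eq: "4*(w^2+w+1) = u^2 + 3" .
  have z: "u^2 + 3 = 0" using assms by simp
  have "4*(w^2+w+1) = 0" using eq unfolding z .
  hence w0: "w^2+w+1 = 0" using four_ne mult_eq_0_iff by blast
  have "w^3 - 1 = (w-1)*(w^2+w+1)" by (simp add: algebra_simps power2_eq_square power3_eq_cube)
  hence w3: "w^3 = 1" using w0 by simp
  have "w^q = w^(3*(q div 3) + q mod 3)" by simp
  also have "\<dots> = w^(q mod 3)" by (simp only: power_add power_mult w3 power_one mult_1)
  finally have wq: "w^q = w^(q mod 3)" .
  have fw: "w^q = (u^q - 1)/2" by (simp add: w_def power_divide frob_sub frob_2)
  show "q mod 3 = 1 \<Longrightarrow> u^q = u"
  proof -
    assume "q mod 3 = 1"
    hence "w^q = w" using wq by simp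
    hence "(u^q - 1)/2 = w" using fw by simp
    hence "(u^q - 1)/2 = (u-1)/2" by (simp only: w_def)
    thus ?thesis using two_ne by simp
  qed
  show "q mod 3 = 2 \<Longrightarrow> u^q = -u"
  proof -
    assume "q mod 3 = 2"
    hence "(u^q - 1)/2 = w^2" using wq fw by simp
    also have "\<dots> = -w - 1" using w0 by (simp add: algebra_simps eq_neg_iff_add_eq_0)
    finally have "u*2 + 2*u^q = 0" using two_ne by (simp add: w_def field_simps)
    hence "2*(u + u^q) = 0" by (simp add: algebra_simps)
    hence "u + u^q = 0" using two_ne mult_eq_0_iff by blast
    thus ?thesis by (metis add_eq_0_iff)
  qed
qed

lemma exists_sqrt: "\<exists>u::'a. u^2 = -3"
proof (cases "\<exists>w::'a. w^2+w+1 = 0")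
  case True
  then obtain w :: 'a where w: "w^2+w+1 = 0" by blast
  have "(2*w+1)^2 = 4*(w^2+w+1) - 3" by (simp add: algebra_simps power2_eq_square)
  then show ?thesis using w by auto
next
  case False
  define n where "n = q^2 - 1"
  define k where "k = n div 3"
  have q5: "q \<ge> 5"
  proof -
    have "p \<le> p^m" by (rule self_le_power) (use p3 m1 in auto)
    thus ?thesis using p3 qd q_odd by presburger
  qed
  have q25: "q^2 \<ge> 25" using mult_le_mono[OF q5 q5] by (simp add: power2_eq_square)
  have "q^2 mod 3 = 1"
  proof -
    have "q^2 mod 3 = ((q mod 3)*(q mod 3)) mod 3" by (simp add: power2_eq_square mod_mult_eq)
    thus ?thesis using q_mod3 by auto
  qed
  hence n3: "n = 3*k" using q25 unfolding n_def k_def by presburger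
  have k1: "k \<ge> 1" using q25 n3 unfolding n_def by linarith
  let ?G = "UNIV - {0::'a}"
  have cardG: "card ?G = n" using cardA by (simp add: card_Diff_singleton n_def)
  have xn: "x^n = 1" if "x \<noteq> 0" for x :: 'a
  proof -
    have qs: "q^2 = Suc n" unfolding n_def using q25 by simp
    have "x^(Suc n) = x" using power_card_same[of x] unfolding cardA qs .
    thus ?thesis using that by simp
  qed
  have inj: "inj_on (\<lambda>x. x^3) ?G"
  proof (rule inj_onI)
    fix x y :: 'a assume x: "x \<in> ?G" and y: "y \<in> ?G" and e: "x^3 = y^3"
    define z where "z = x/y"
    have "z^3 = 1" using e y by (simp add: z_def power_divide)
    hence "(z-1)*(z^2+z+1) = 0" by (simp add: algebra_simps power2_eq_square power3_eq_cube)
    hence "z = 1" using False by auto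
    thus "x = y" using y by (simp add: z_def)
  qed
  have img: "(\<lambda>x. x^3) ` ?G = ?G"
    by (rule endo_inj_surj[OF _ _ inj]) auto
  have Gsub: "?G \<subseteq> {x. poly (monom 1 k - 1) x = 0}"
  proof
    fix y assume y: "y \<in> ?G"
    then obtain x where x: "x \<in> ?G" "y = x^3" using img by (metis imageE)
    have "y^k = x^n" using x(2) n3 by (simp add: power_mult)
    also have "\<dots> = 1" using x(1) xn by simp
    finally show "y \<in> {x. poly (monom 1 k - 1) x = 0}" by (simp add: poly_monom)
  qed
  have P0: "monom 1 k - 1 \<noteq> (0::'a poly)"
  proof
    assume "monom 1 k - 1 = (0::'a poly)"
    hence "poly (monom 1 k - 1) (0::'a) = 0" by simp
    thus False using k1 by (simp add: poly_monom power_0_left)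
  qed
  have "n \<le> card {x. poly (monom 1 k - 1) x = (0::'a)}"
    using cardG card_mono[OF _ Gsub] by simp
  also have "\<dots> \<le> degree (monom 1 k - 1 :: 'a poly)" by (rule card_poly_roots_bound[OF P0])
  also have "\<dots> \<le> k" by (rule degree_diff_le) (simp_all add: degree_monom_le)
  finally show ?thesis using n3 k1 by simp
qed


lemma main:
  "card {u :: 'a. 2 * u ^ (q + 1) + u ^ 2 = 3} = (if q mod 6 = 5 then 4 else 2)
   \<and> (q mod 6 = 5 \<longrightarrow> diff_unif (\<lambda>x :: 'a. x ^ (q + 2)) = 4)"
proof -
  have n1: "(1::'a) \<noteq> -1"
  proof
    assume "(1::'a) = -1"
    hence "1 + 1 = (0::'a)" by (simp only: eq_neg_iff_add_eq_0)
    thus False using two_ne by simp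
  qed
  have c1: "card {u :: 'a. 2*u^(q+1)+u^2 = 3} = (if q mod 6 = 5 then 4 else 2)"
  proof (cases "q mod 6 = 5")
    case True
    hence q2: "q mod 3 = 2" using q_mod6 by simp
    obtain u0 :: 'a where u0: "u0^2 = -3" using exists_sqrt by blast
    have T: "{u::'a. u^2 = -3 \<and> u^q = -u} = {u0, -u0}"
    proof (rule set_eqI, rule iffI)
      fix u assume "u \<in> {u::'a. u^2 = -3 \<and> u^q = -u}"
      hence "u^2 = u0^2" using u0 by simp
      hence "u = u0 \<or> u = -u0" by (simp add: power2_eq_iff)
      thus "u \<in> {u0, -u0}" by auto
    next
      fix u assume "u \<in> {u0, -u0}"
      hence uu: "u^2 = -3" using u0 by auto
      thus "u \<in> {u::'a. u^2 = -3 \<and> u^q = -u}" using cube(2)[OF uu q2] by simp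
    qed
    have S: "{u::'a. 2*u^(q+1)+u^2 = 3} = {1, -1, u0, -u0}" using sol3 T by auto
    have sq1: "u0^2 \<noteq> 1"
    proof
      assume "u0^2 = 1"
      hence "(1::'a) = -3" using u0 by simp
      hence "1 + 3 = (0::'a)" by (simp only: eq_neg_iff_add_eq_0)
      thus False using four_ne by simp
    qed
    have d1: "u0 \<noteq> 1" "u0 \<noteq> -1" "-u0 \<noteq> 1" "-u0 \<noteq> -1" using sq1 by (auto simp: minus_equation_iff)
    have "u0 \<noteq> 0" using u0 three_ne by auto
    have d2: "u0 \<noteq> -u0"
    proof
      assume "u0 = -u0"
      hence "u0 + u0 = 0" by (simp only: eq_neg_iff_add_eq_0)
      hence "2*u0 = 0" by simp
      thus False using two_ne \<open>u0 \<noteq> 0\<close> by simp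
    qed
    have "card {1, -1, u0, -u0} = 4" using n1 d1 d2 by auto
    thus ?thesis using S True by simp
  next
    case False
    hence q1: "q mod 3 = 1" using q_mod6 q_mod3 by simp
    have T: "{u::'a. u^2 = -3 \<and> u^q = -u} = {}"
    proof -
      have False if h: "u^2 = -3" "u^q = -u" for u :: 'a
      proof -
        have "u = -u" using cube(1)[OF h(1) q1] h(2) by simp
        hence "u + u = 0" by (simp only: eq_neg_iff_add_eq_0)
        hence "2*u = 0" by simp
        hence "u = 0" using two_ne by simp
        thus False using h(1) three_ne by simp
      qed
      thus ?thesis by auto
    qed
    have S: "{u::'a. 2*u^(q+1)+u^2 = 3} = {1, -1}" using sol3 T by auto
    show ?thesis using S False n1 by simp
  qed
  have c2: "diff_unif (\<lambda>x :: 'a. x ^ (q + 2)) = 4" if True: "q mod 6 = 5"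
  proof -
    let ?f = "\<lambda>x :: 'a. x ^ (q + 2)"
    let ?D = "{diff_count ?f a b | a b. a \<noteq> 0}"
    have dc: "diff_count ?f a b = card {u::'a. 2*u^(q+1)+u^2 = b/a^(q+2) - 1/4}" if "a \<noteq> 0" for a b :: 'a
      using card_eq[OF that, of b] by (simp add: diff_count_def)
    have fin: "finite ?D"
    proof (rule finite_subset)
      show "?D \<subseteq> (\<lambda>(a,b). diff_count ?f a b) ` UNIV" by auto
    qed simp
    have le: "y \<le> 4" if "y \<in> ?D" for y
      using that dc bound4 by auto
    have "diff_count ?f 1 (3 + 1/4) = 4"
      using dc[of 1 "3 + 1/4"] c1 True by simp
    hence mem: "4 \<in> ?D" by (metis (mono_tags, lifting) mem_Collect_eq one_neq_zero)
    show ?thesis unfolding diff_unif_def by (rule Max_eqI[OF fin le mem])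
  qed
  show ?thesis using c1 c2 by blast
qed

end

theorem proposition5:
  fixes p m q :: nat
  assumes "prime p" and "p > 3" and "m \<ge> 1" and "q = p ^ m"
    and "card (UNIV :: ('a::{field,finite}) set) = q ^ 2"
  shows "card {u :: 'a. 2 * u ^ (q + 1) + u ^ 2 = 3} = (if q mod 6 = 5 then 4 else 2)
         \<and> (q mod 6 = 5 \<longrightarrow> diff_unif (\<lambda>x :: 'a. x ^ (q + 2)) = 4)"
  by (rule main[OF assms])

end
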